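(* Let $x_1,\dots,x_n$ be observations, $\Theta\subset\mathbb{R}^{N_\theta}$, and $g(x,\theta)\in\mathbb{R}^{N_g}$ a moment function; write $g_i=g(x_i,\theta)$ and $\hat g=n^{-1}\sum_i g_i$. The exponentially tilted empirical likelihood (ETEL) estimator $\hat\theta_{\mathrm{ETEL}}$ maximizes the objective function $$\ln\hat L(\theta)=-\ln\Big(n^{-1}\sum_i\exp\big(\hat\lambda'(g_i-\hat g)\big)\Big),$$ where $\hat\lambda=\hat\lambda(\theta)$ is such that $n^{-1}\sum_i\exp(\hat\lambda'g_i)g_i=0$. Moreover, the first-order conditions for $\hat\theta_{\mathrm{ETEL}}$ can be written as $$n^{-1}\sum_i(1-n\hat w_i)\frac{d(\hat\lambda'g_i)}{d\theta'}=0,$$ where the total derivative indicates that $\hat\lambda=\hat\lambda(\theta)$ is allowed to vary with $\theta$, and $\hat w_i=\exp(\hat\lambda'g_i)/\sum_j\exp(\hat\lambda'g_j)$.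
   Context: The ETEL estimator is defined by $\hat\theta=\arg\min_\theta n^{-1}\sum_i\big(-\ln(n\hat w_i(\theta))\big)$, where $(\hat w_i(\theta))_{i=1}^n$ solves $\min_{w_1,\dots,w_n} n^{-1}\sum_i nw_i\ln(nw_i)$ subject to $\sum_i w_i g(x_i,\theta)=0$ and $\sum_i w_i=1$. Equivalently (dual form), $\hat w_i(\theta)=\exp(\hat\lambda(\theta)'g(x_i,\theta))/\sum_j\exp(\hat\lambda(\theta)'g(x_j,\theta))$ with $\hat\lambda(\theta)=\arg\max_{\lambda\in\mathbb{R}^{N_g}} n^{-1}\sum_i\big(-\exp(\lambda'g(x_i,\theta))\big)$. *)

theory Defs
  imports "HOL-Analysis.Analysis"
begin

text \<open>Parameters live in a Euclidean space 'p, moments in a Euclidean space 'g.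
  lam is the (given) multiplier map theta |-> lambda-hat(theta).\<close>

definition gbar :: "nat \<Rightarrow> (nat \<Rightarrow> 'x) \<Rightarrow> ('x \<Rightarrow> 'p \<Rightarrow> 'g::real_vector) \<Rightarrow> 'p \<Rightarrow> 'g" where
  "gbar n x g \<theta> = (1 / real n) *\<^sub>R (\<Sum>i<n. g (x i) \<theta>)"

definition is_lambda_hat :: "nat \<Rightarrow> (nat \<Rightarrow> 'x) \<Rightarrow> ('x \<Rightarrow> 'p \<Rightarrow> 'g::real_inner) \<Rightarrow> 'p \<Rightarrow> 'g \<Rightarrow> bool" where
  "is_lambda_hat n x g \<theta> l \<longleftrightarrow>
     (\<forall>l'. (1 / real n) * (\<Sum>i<n. - exp (l' \<bullet> g (x i) \<theta>))
            \<le> (1 / real n) * (\<Sum>i<n. - exp (l \<bullet> g (x i) \<theta>)))"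

definition etel_w :: "nat \<Rightarrow> (nat \<Rightarrow> 'x) \<Rightarrow> ('x \<Rightarrow> 'p \<Rightarrow> 'g::real_inner) \<Rightarrow> ('p \<Rightarrow> 'g) \<Rightarrow> 'p \<Rightarrow> nat \<Rightarrow> real" where
  "etel_w n x g lam \<theta> i =
     exp (lam \<theta> \<bullet> g (x i) \<theta>) / (\<Sum>j<n. exp (lam \<theta> \<bullet> g (x j) \<theta>))"

text \<open>ETEL criterion n^{-1} sum_i -ln(n w_i(theta)), minimized by the ETEL estimator.\<close>
definition etel_crit :: "nat \<Rightarrow> (nat \<Rightarrow> 'x) \<Rightarrow> ('x \<Rightarrow> 'p \<Rightarrow> 'g::real_inner) \<Rightarrow> ('p \<Rightarrow> 'g) \<Rightarrow> 'p \<Rightarrow> real" where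
  "etel_crit n x g lam \<theta> = (1 / real n) * (\<Sum>i<n. - ln (real n * etel_w n x g lam \<theta> i))"

definition etel_lnL :: "nat \<Rightarrow> (nat \<Rightarrow> 'x) \<Rightarrow> ('x \<Rightarrow> 'p \<Rightarrow> 'g::real_inner) \<Rightarrow> ('p \<Rightarrow> 'g) \<Rightarrow> 'p \<Rightarrow> real" where
  "etel_lnL n x g lam \<theta> =
     - ln ((1 / real n) * (\<Sum>i<n. exp (lam \<theta> \<bullet> (g (x i) \<theta> - gbar n x g \<theta>))))"

end

theory Submission imports Defs begin

lemma foc:
  fixes G :: "nat \<Rightarrow> 'g::euclidean_space"
  assumes n: "n \<ge> 1" and mx: "\<forall>l'. (1 / real n) * (\<Sum>i<n. - exp (l' \<bullet> G i))
            \<le> (1 / real n) * (\<Sum>i<n. - exp (l \<bullet> G i))"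
  shows "(\<Sum>i<n. exp (l \<bullet> G i) *\<^sub>R G i) = 0"
proof -
  let ?f = "\<lambda>l'. (\<Sum>i<n. - exp (l' \<bullet> G i))"
  have le: "\<forall>y\<in>UNIV. ?f y \<le> ?f l"
  proof
    fix y show "?f y \<le> ?f l" using mx[rule_format, of y] n by (simp add: divide_right_mono_neg divide_le_cancel)
  qed
  have d: "(?f has_derivative (\<lambda>v. \<Sum>i<n. - (exp (l \<bullet> G i) * (v \<bullet> G i)))) (at l)"
    by (auto intro!: derivative_eq_intros simp: mult.commute)
  from differential_zero_maxmin[OF _ open_UNIV d] le
  have "(\<lambda>v. \<Sum>i<n. - (exp (l \<bullet> G i) * (v \<bullet> G i))) = (\<lambda>v. 0)" by blast
  hence "(\<Sum>i<n. - (exp (l \<bullet> G i) * (S \<bullet> G i))) = 0" for S by metis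
  hence "S \<bullet> (\<Sum>i<n. exp (l \<bullet> G i) *\<^sub>R G i) = 0" for S
    by (simp add: inner_sum_right sum_negf mult.commute)
  thus ?thesis by (metis inner_eq_zero_iff)
qed

lemma lnL_eq:
  fixes g :: "'x \<Rightarrow> 'p::euclidean_space \<Rightarrow> 'g::euclidean_space"
  assumes n: "n \<ge> 1"
  shows "etel_lnL n x g lam \<theta> = (1 / real n) * (\<Sum>i<n. lam \<theta> \<bullet> g (x i) \<theta>)
     - ln ((\<Sum>i<n. exp (lam \<theta> \<bullet> g (x i) \<theta>)) / real n)"
proof -
  let ?a = "\<lambda>i. lam \<theta> \<bullet> g (x i) \<theta>"
  let ?c = "(1 / real n) * (\<Sum>i<n. ?a i)"
  let ?S = "\<Sum>i<n. exp (?a i)"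
  have c: "lam \<theta> \<bullet> gbar n x g \<theta> = ?c"
    by (simp add: gbar_def inner_sum_right)
  have "(\<Sum>i<n. exp (lam \<theta> \<bullet> (g (x i) \<theta> - gbar n x g \<theta>))) = ?S * exp (- ?c)"
    by (simp add: inner_diff_right c exp_diff sum_distrib_right exp_minus divide_inverse)
  moreover have Sp: "?S > 0" using n by (intro sum_pos) (auto simp: lessThan_empty_iff)
  ultimately show ?thesis using n
    by (simp add: etel_lnL_def ln_mult divide_inverse mult.commute)
qed

lemma crit_eq:
  fixes g :: "'x \<Rightarrow> 'p::euclidean_space \<Rightarrow> 'g::euclidean_space"
  assumes n: "n \<ge> 1"
  shows "etel_crit n x g lam \<theta> = - etel_lnL n x g lam \<theta>"
proof -
  let ?a = "\<lambda>i. lam \<theta> \<bullet> g (x i) \<theta>"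
  let ?S = "\<Sum>i<n. exp (?a i)"
  have Sp: "?S > 0" using n by (intro sum_pos) (auto simp: lessThan_empty_iff)
  have "ln (real n * etel_w n x g lam \<theta> i) = ln (real n) + ?a i - ln ?S" for i
    using n Sp by (simp add: etel_w_def ln_mult ln_div)
  hence "etel_crit n x g lam \<theta> = (1/real n) * (\<Sum>i<n. ln ?S - ln (real n) - ?a i)"
    unfolding etel_crit_def by (intro arg_cong[where f="\<lambda>t. (1/real n) * t"] sum.cong) auto
  also have "\<dots> = ln ?S - ln (real n) - (1/real n) * (\<Sum>i<n. ?a i)"
    using n by (simp add: sum_subtractf sum.distrib field_simps)
  finally show ?thesis using lnL_eq[OF n, of x g lam \<theta>] n Sp by (simp add: ln_div)
qed

lemma deriv_gen:
  fixes a :: "nat \<Rightarrow> 'p::euclidean_space \<Rightarrow> real"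
  assumes n: "n \<ge> 1" and Da: "\<forall>i<n. (a i has_derivative D i) (at \<theta>0)"
  shows "((\<lambda>\<theta>. (1 / real n) * (\<Sum>i<n. a i \<theta>)
     - ln ((\<Sum>i<n. exp (a i \<theta>)) / real n)) has_derivative
     (\<lambda>v. (1 / real n) * (\<Sum>i<n. D i v) - (\<Sum>i<n. exp (a i \<theta>0) * D i v) / (\<Sum>i<n. exp (a i \<theta>0)))) (at \<theta>0)"
proof -
  have Sp: "(\<Sum>i<n. exp (a i \<theta>0)) > 0" using n by (intro sum_pos) (auto simp: lessThan_empty_iff)
  show ?thesis
    using Da Sp n
    by (auto intro!: derivative_eq_intros simp: lessThan_empty_iff field_simps mult.commute)
qed


lemma deriv_lnL:
  fixes g :: "'x \<Rightarrow> 'p::euclidean_space \<Rightarrow> 'g::euclidean_space"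
  assumes n: "n \<ge> 1"
    and D: "\<forall>i<n. ((\<lambda>\<theta>. lam \<theta> \<bullet> g (x i) \<theta>) has_derivative D i) (at \<theta>0)"
  shows "(etel_lnL n x g lam has_derivative
                (\<lambda>v. (1 / real n) * (\<Sum>i<n. (1 - real n * etel_w n x g lam \<theta>0 i) * D i v))) (at \<theta>0)"
proof -
  let ?a = "\<lambda>i \<theta>. lam \<theta> \<bullet> g (x i) \<theta>"
  let ?S = "\<Sum>i<n. exp (?a i \<theta>0)"
  have Sp: "?S > 0" using n by (intro sum_pos) (auto simp: lessThan_empty_iff)
  have eq: "etel_lnL n x g lam = (\<lambda>\<theta>. (1 / real n) * (\<Sum>i<n. ?a i \<theta>)
     - ln ((\<Sum>i<n. exp (?a i \<theta>)) / real n))"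
    using lnL_eq[OF n] by blast
  have "(\<lambda>v. (1 / real n) * (\<Sum>i<n. D i v) - (\<Sum>i<n. exp (?a i \<theta>0) * D i v) / ?S)
     = (\<lambda>v. (1 / real n) * (\<Sum>i<n. (1 - real n * etel_w n x g lam \<theta>0 i) * D i v))"
  proof
    fix v
    have "(\<Sum>i<n. (1 - real n * etel_w n x g lam \<theta>0 i) * D i v)
       = (\<Sum>i<n. D i v) - real n * ((\<Sum>i<n. exp (?a i \<theta>0) * D i v) / ?S)"
      by (simp add: etel_w_def left_diff_distrib sum_subtractf sum_distrib_left sum_divide_distrib mult.assoc)
    thus "(1 / real n) * (\<Sum>i<n. D i v) - (\<Sum>i<n. exp (?a i \<theta>0) * D i v) / ?S
       = (1 / real n) * (\<Sum>i<n. (1 - real n * etel_w n x g lam \<theta>0 i) * D i v)"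
      using n by (simp add: right_diff_distrib)
  qed
  thus ?thesis using deriv_gen[OF n, of ?a D \<theta>0] D by (simp add: eq)
qed

theorem theorem2:
  fixes n :: nat and x :: "nat \<Rightarrow> 'x"
    and g :: "'x \<Rightarrow> 'p::euclidean_space \<Rightarrow> 'g::euclidean_space"
    and \<Theta> :: "'p set" and lam :: "'p \<Rightarrow> 'g"
  assumes n_pos: "n \<ge> 1"
    and lam_hat: "\<forall>\<theta>\<in>\<Theta>. is_lambda_hat n x g \<theta> (lam \<theta>)"
  shows
    "(\<forall>\<theta>\<in>\<Theta>. (1 / real n) *\<^sub>R (\<Sum>i<n. exp (lam \<theta> \<bullet> g (x i) \<theta>) *\<^sub>R g (x i) \<theta>) = 0)
     \<and> (\<forall>\<theta>\<in>\<Theta>. etel_crit n x g lam \<theta> = - etel_lnL n x g lam \<theta>)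
     \<and> (\<forall>\<theta>0. is_arg_min (etel_crit n x g lam) (\<lambda>\<theta>. \<theta> \<in> \<Theta>) \<theta>0
              \<longleftrightarrow> is_arg_max (etel_lnL n x g lam) (\<lambda>\<theta>. \<theta> \<in> \<Theta>) \<theta>0)
     \<and> (\<forall>\<theta>0 D. (\<forall>i<n. ((\<lambda>\<theta>. lam \<theta> \<bullet> g (x i) \<theta>) has_derivative D i) (at \<theta>0))
          \<longrightarrow> (etel_lnL n x g lam has_derivative
                (\<lambda>v. (1 / real n) * (\<Sum>i<n. (1 - real n * etel_w n x g lam \<theta>0 i) * D i v))) (at \<theta>0))
     \<and> (\<forall>\<theta>0 D. \<theta>0 \<in> interior \<Theta> \<and> is_arg_max (etel_lnL n x g lam) (\<lambda>\<theta>. \<theta> \<in> \<Theta>) \<theta>0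
          \<and> (\<forall>i<n. ((\<lambda>\<theta>. lam \<theta> \<bullet> g (x i) \<theta>) has_derivative D i) (at \<theta>0))
          \<longrightarrow> (\<forall>v. (1 / real n) * (\<Sum>i<n. (1 - real n * etel_w n x g lam \<theta>0 i) * D i v) = 0))"
proof -
  have crit: "etel_crit n x g lam = (\<lambda>\<theta>. - etel_lnL n x g lam \<theta>)"
    using crit_eq[OF n_pos] by blast
  have A: "\<forall>\<theta>\<in>\<Theta>. (1 / real n) *\<^sub>R (\<Sum>i<n. exp (lam \<theta> \<bullet> g (x i) \<theta>) *\<^sub>R g (x i) \<theta>) = 0"
  proof
    fix \<theta> assume "\<theta> \<in> \<Theta>"
    with lam_hat have "is_lambda_hat n x g \<theta> (lam \<theta>)" by blast
    from foc[OF n_pos this[unfolded is_lambda_hat_def]] show "(1 / real n) *\<^sub>R (\<Sum>i<n. exp (lam \<theta> \<bullet> g (x i) \<theta>) *\<^sub>R g (x i) \<theta>) = 0" by simp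
  qed
  have C: "\<forall>\<theta>0. is_arg_min (etel_crit n x g lam) (\<lambda>\<theta>. \<theta> \<in> \<Theta>) \<theta>0
              \<longleftrightarrow> is_arg_max (etel_lnL n x g lam) (\<lambda>\<theta>. \<theta> \<in> \<Theta>) \<theta>0"
    by (auto simp: crit is_arg_min_def is_arg_max_def)
  have D: "\<forall>\<theta>0 D. (\<forall>i<n. ((\<lambda>\<theta>. lam \<theta> \<bullet> g (x i) \<theta>) has_derivative D i) (at \<theta>0))
          \<longrightarrow> (etel_lnL n x g lam has_derivative
                (\<lambda>v. (1 / real n) * (\<Sum>i<n. (1 - real n * etel_w n x g lam \<theta>0 i) * D i v))) (at \<theta>0)"
    using deriv_lnL[OF n_pos] by blast
  have E: "\<forall>\<theta>0 D. \<theta>0 \<in> interior \<Theta> \<and> is_arg_max (etel_lnL n x g lam) (\<lambda>\<theta>. \<theta> \<in> \<Theta>) \<theta>0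
          \<and> (\<forall>i<n. ((\<lambda>\<theta>. lam \<theta> \<bullet> g (x i) \<theta>) has_derivative D i) (at \<theta>0))
          \<longrightarrow> (\<forall>v. (1 / real n) * (\<Sum>i<n. (1 - real n * etel_w n x g lam \<theta>0 i) * D i v) = 0)"
  proof (intro allI impI)
    fix \<theta>0 D v assume h: "\<theta>0 \<in> interior \<Theta> \<and> is_arg_max (etel_lnL n x g lam) (\<lambda>\<theta>. \<theta> \<in> \<Theta>) \<theta>0
          \<and> (\<forall>i<n. ((\<lambda>\<theta>. lam \<theta> \<bullet> g (x i) \<theta>) has_derivative D i) (at \<theta>0))"
    have le: "\<forall>y\<in>interior \<Theta>. etel_lnL n x g lam y \<le> etel_lnL n x g lam \<theta>0"
      using h interior_subset by (fastforce simp: is_arg_max_linorder)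
    from differential_zero_maxmin[OF _ open_interior deriv_lnL[OF n_pos, where D=D and x=x and g=g and lam=lam]] h[THEN conjunct2, THEN conjunct2] h le
    have "(\<lambda>v. (1 / real n) * (\<Sum>i<n. (1 - real n * etel_w n x g lam \<theta>0 i) * D i v)) = (\<lambda>v. 0)"
      by blast
    thus "(1 / real n) * (\<Sum>i<n. (1 - real n * etel_w n x g lam \<theta>0 i) * D i v) = 0" by metis
  qed
  show ?thesis using A crit_eq[OF n_pos] C D E by blast
qed

end
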